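(* Let $q=p^n$, $p>2$ prime, $g\ge1$ with $\gcd(p,g)=1$, and let $C: y^2=x^{2g+1}+ax^{g+1}+bx$ be a genus $g$ hyperelliptic curve over $\mathbb{F}_q$ ($b\ne0$). Let $m=\frac{p-1}{2}$, let $W=(w_{i,j}(a,b))_{1\le i,j\le g}$ be the Cartier–Manin matrix of $C$, and fix $\sqrt b\in\mathbb{F}_{q^2}$. Then for $1\le i,j\le g$: 1. if $ip-j\equiv m\pmod g$, then $$w_{i,j}(a,b)=\sqrt{b}^{\,2m+\frac{m-(ip-j)}{g}}\; w_{i,j}\!\left(\tfrac{a}{\sqrt b},1\right)=\sqrt{b}^{\,2m+\frac{m-(ip-j)}{g}}\;P_{\frac{ip-j}{g}-\frac{p-1}{2g}}\!\left(-\frac{a}{2\sqrt b}\right),$$ where $w_{i,j}(\frac{a}{\sqrt b},1)$ denotes the corresponding entry of the Cartier–Manin matrix of $y^2=x^{2g+1}+\frac{a}{\sqrt b}x^{g+1}+x$, and the equality holds in $\mathbb{F}_{q^2}$ (and the value lies in $\mathbb{F}_q$); 2. otherwise $w_{i,j}(a,b)=0$.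
   Context: For a hyperelliptic curve $y^2=f(x)$ with $f$ monic of degree $2g+1$ over a field of characteristic $p>2$, write $f(x)^{(p-1)/2}=\sum_k c_k x^k$; the Cartier–Manin matrix is $W=(w_{i,j})_{1\le i,j\le g}$ with $w_{i,j}=c_{ip-j}$. $P_n$ denotes the $n$-th Legendre polynomial (its coefficients have only powers of 2 in denominators, so it is reduced modulo $p$). The notation $\sqrt b^{\,e}$ means the $e$-th power of the fixed element $\sqrt b$ (here $e$ is an integer). *)

theory Defs
  imports "HOL-Computational_Algebra.Polynomial" "HOL-Number_Theory.Cong" "HOL-Library.Cardinality"
begin

definition hyp_poly :: "nat \<Rightarrow> 'a::comm_ring_1 \<Rightarrow> 'a \<Rightarrow> 'a poly" where
  "hyp_poly g a b = monom 1 (2*g+1) + monom a (g+1) + monom b 1"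

definition cm_coeff :: "nat \<Rightarrow> 'a::comm_ring_1 poly \<Rightarrow> int \<Rightarrow> 'a" where
  "cm_coeff p f k = (if k < 0 then 0 else coeff (f ^ ((p - 1) div 2)) (nat k))"

definition cartier_manin_entry :: "nat \<Rightarrow> 'a::comm_ring_1 poly \<Rightarrow> nat \<Rightarrow> nat \<Rightarrow> 'a" where
  "cartier_manin_entry p f i j = cm_coeff p f (int i * int p - int j)"

text \<open>Legendre polynomial P_n via the explicit formula
  P_n(x) = 2^(-n) * sum_k (n choose k)^2 (x-1)^(n-k) (x+1)^k,
  interpreted in any field in which 2 is invertible (e.g. characteristic p > 2).\<close>
definition legendre_poly :: "nat \<Rightarrow> 'a::field poly" where
  "legendre_poly n = smult (inverse (2 ^ n))
     (\<Sum>k\<le>n. smult (of_nat ((n choose k)^2)) ([:-1, 1:] ^ (n - k) * [:1, 1:] ^ k))"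

end

theory Submission
  imports Defs "HOL-Computational_Algebra.Primes"
begin



lemma pcompose_power_left': "pcompose (p ^ n) r = (pcompose p r) ^ n"
  for p r :: "'a::comm_semiring_1 poly"
  by (induction n) (auto simp: pcompose_mult pcompose_1)

lemma coeff_lin_pow:
  fixes a b :: "'a::comm_semiring_1"
  shows "coeff ([:a, b:] ^ n) j = of_nat (n choose j) * b ^ j * a ^ (n - j)"
proof (induction n arbitrary: j)
  case 0
  then show ?case by (cases j) auto
next
  case (Suc n)
  have e: "[:a, b:] ^ Suc n = smult a ([:a, b:] ^ n) + pCons 0 (smult b ([:a, b:] ^ n))"
    by (simp add: mult_pCons_left)
  show ?case
  proof (cases j)
    case 0
    then show ?thesis using Suc by (simp add: e)
  next
    case (Suc j')
    have "coeff ([:a, b:] ^ Suc n) j = a * coeff ([:a, b:] ^ n) (Suc j') + b * coeff ([:a, b:] ^ n) j'"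
      by (simp add: e Suc)
    also have "\<dots> = a * (of_nat (n choose Suc j') * b ^ Suc j' * a ^ (n - Suc j'))
        + b * (of_nat (n choose j') * b ^ j' * a ^ (n - j'))"
      using Suc.IH by simp
    also have "\<dots> = of_nat (Suc n choose Suc j') * b ^ Suc j' * a ^ (Suc n - Suc j')"
    proof (cases "j' < n")
      case True
      then have "a ^ (n - j') = a * a ^ (n - Suc j')"
        by (metis Suc_diff_Suc power_Suc)
      then show ?thesis by (simp add: algebra_simps)
    next
      case False
      then show ?thesis by (auto simp: algebra_simps binomial_eq_0 le_eq_less_or_eq)
    qed
    finally show ?thesis using Suc by simp
  qed
qed

lemma coeff_pcompose_xpow:
  fixes P :: "'a::comm_semiring_1 poly"
  assumes "g \<ge> 1"
  shows "coeff (pcompose P (monom 1 g)) r = (if g dvd r then coeff P (r div g) else 0)"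
proof (induction P arbitrary: r)
  case 0
  then show ?case by simp
next
  case (pCons c P)
  have "coeff (pcompose (pCons c P) (monom 1 g)) r
      = (if r = 0 then c else 0) + (if r < g then 0 else coeff (pcompose P (monom 1 g)) (r - g))"
    by (cases r) (simp_all add: pcompose_pCons coeff_monom_mult)
  also have "\<dots> = (if g dvd r then coeff (pCons c P) (r div g) else 0)"
  proof (cases "r = 0")
    case True
    then show ?thesis using assms by simp
  next
    case False
    show ?thesis
    proof (cases "r < g")
      case True
      then show ?thesis using False assms by (auto dest: dvd_imp_le simp: coeff_pCons split: nat.splits)
    next
      case ng: False
      have d: "g dvd r \<longleftrightarrow> g dvd (r - g)"
        using ng by (simp add: dvd_minus_self)
      have "g dvd r \<Longrightarrow> r div g = Suc ((r - g) div g)"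
        using ng assms by (metis One_nat_def Suc_diff_le diff_is_0_eq div_if le_less_linear not_less zero_less_diff)
      then show ?thesis using pCons.IH[of "r - g"] False ng d by (auto simp: coeff_pCons split: nat.splits)
    qed
  qed
  finally show ?case .
qed




lemma comb_identity:
  fixes w :: "'a::comm_ring_1"
  shows "(\<Sum>k\<le>t. of_nat ((t choose k)^2) * w ^ (t - k) * (w + 1) ^ k)
       = (\<Sum>k\<le>t. of_nat ((t choose k) * ((t + k) choose k)) * w ^ k)"
proof -
  define Z :: "'a poly" where "Z = [:1, 1:]"
  define Q where "Q = [:w, w + 1:]"
  have cZ: "coeff (Z ^ n) i = of_nat (n choose i)" for n i
    unfolding Z_def using coeff_lin_pow[of 1 1 n i] by simp
  have cQ: "coeff (Q ^ n) i = of_nat (n choose i) * (w + 1) ^ i * w ^ (n - i)" for n i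
    unfolding Q_def by (rule coeff_lin_pow)
  have "coeff ((Q * Z) ^ t) t = (\<Sum>i\<le>t. coeff (Q ^ t) i * coeff (Z ^ t) (t - i))"
    by (simp add: power_mult_distrib coeff_mult)
  also have "\<dots> = (\<Sum>k\<le>t. of_nat ((t choose k)^2) * w ^ (t - k) * (w + 1) ^ k)"
    by (intro sum.cong refl) (auto simp: cQ cZ binomial_symmetric[symmetric] power2_eq_square algebra_simps)
  finally have L: "coeff ((Q * Z) ^ t) t = (\<Sum>k\<le>t. of_nat ((t choose k)^2) * w ^ (t - k) * (w + 1) ^ k)" .
  have QZ: "Q * Z = smult w (Z ^ 2) + monom 1 1 * Z"
    unfolding Q_def Z_def by (simp add: power2_eq_square monom_Suc algebra_simps)
  have "(Q * Z) ^ t = (\<Sum>k\<le>t. of_nat (t choose k) * (smult w (Z ^ 2)) ^ k * (monom 1 1 * Z) ^ (t - k))"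
    unfolding QZ by (rule binomial_ring)
  also have "\<dots> = (\<Sum>k\<le>t. smult (of_nat (t choose k) * w ^ k) (monom 1 (t - k) * Z ^ (t + k)))"
  proof (intro sum.cong refl)
    fix k assume "k \<in> {..t}"
    then have e: "(t - k) + k * 2 = t + k" by auto
    have ZZ: "Z ^ (t - k) * Z ^ (k * 2) = Z ^ (t + k)" by (metis e power_add)
    have "of_nat (t choose k) * (smult w (Z ^ 2)) ^ k * (monom 1 1 * Z) ^ (t - k)
      = smult (of_nat (t choose k)) (smult (w ^ k) (Z ^ (k * 2))) * (monom 1 (t - k) * Z ^ (t - k))"
      by (simp add: smult_power power_mult_distrib monom_power of_nat_mult_conv_smult flip: power_mult)
         (simp add: mult.commute)
    also have "\<dots> = smult (of_nat (t choose k) * w ^ k) (monom 1 (t - k) * (Z ^ (t - k) * Z ^ (k * 2)))"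
      by (simp add: mult_ac)
    finally show "of_nat (t choose k) * (smult w (Z ^ 2)) ^ k * (monom 1 1 * Z) ^ (t - k)
      = smult (of_nat (t choose k) * w ^ k) (monom 1 (t - k) * Z ^ (t + k))"
      by (simp only: ZZ)
  qed
  finally have "coeff ((Q * Z) ^ t) t = (\<Sum>k\<le>t. (of_nat (t choose k) * w ^ k) * coeff (monom 1 (t - k) * Z ^ (t + k)) t)"
    by (simp add: coeff_sum)
  also have "\<dots> = (\<Sum>k\<le>t. of_nat ((t choose k) * ((t + k) choose k)) * w ^ k)"
    by (intro sum.cong refl) (auto simp: coeff_monom_mult cZ algebra_simps)
  finally show ?thesis using L by simp
qed

lemma legendre_eval:
  fixes x :: "'a::field"
  assumes two: "(2::'a) \<noteq> 0"
  shows "poly (legendre_poly t) x = (\<Sum>k\<le>t. of_nat ((t choose k) * ((t + k) choose k)) * ((x - 1) / 2) ^ k)"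
proof -
  define w where "w = (x - 1) / 2"
  have x1: "x - 1 = 2 * w" and x2: "x + 1 = 2 * (w + 1)"
    using two by (auto simp: w_def field_simps)
  have "poly (legendre_poly t) x = inverse (2 ^ t) * (\<Sum>k\<le>t. of_nat ((t choose k)^2) * (x - 1) ^ (t - k) * (x + 1) ^ k)"
    by (simp add: legendre_poly_def poly_sum algebra_simps)
  also have "\<dots> = (\<Sum>k\<le>t. of_nat ((t choose k)^2) * w ^ (t - k) * (w + 1) ^ k)"
    unfolding sum_distrib_left
  proof (intro sum.cong refl)
    fix k assume "k \<in> {..t}"
    then have h: "(2::'a) ^ (t - k) * 2 ^ k = 2 ^ t" by (simp flip: power_add)
    have "inverse (2 ^ t) * (of_nat ((t choose k)^2) * (x - 1) ^ (t - k) * (x + 1) ^ k)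
       = (inverse (2 ^ t) * (2 ^ (t - k) * 2 ^ k)) * (of_nat ((t choose k)^2) * w ^ (t - k) * (w + 1) ^ k)"
      unfolding x1 x2 power_mult_distrib by (simp only: mult_ac)
    also have "\<dots> = of_nat ((t choose k)^2) * w ^ (t - k) * (w + 1) ^ k"
      unfolding h using two by simp
    finally show "inverse (2 ^ t) * (of_nat ((t choose k)^2) * (x - 1) ^ (t - k) * (x + 1) ^ k)
       = of_nat ((t choose k)^2) * w ^ (t - k) * (w + 1) ^ k" .
  qed
  also have "\<dots> = (\<Sum>k\<le>t. of_nat ((t choose k) * ((t + k) choose k)) * w ^ k)"
    by (rule comb_identity)
  finally show ?thesis by (simp add: w_def)
qed




lemma of_nat_nz_char:
  assumes "CHAR('a::field) = p" "0 < n" "n < p"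
  shows "(of_nat n :: 'a) \<noteq> 0"
  using assms by (auto simp: of_nat_eq_0_iff_char_dvd dest: dvd_imp_le)

lemma binom_rec1: "Suc k * (n choose Suc k) = (n - k) * (n choose k)"
  by (metis binomial_absorb_comp binomial_absorption)

lemma central_rec: "Suc k * (2 * Suc k choose Suc k) = 2 * (2 * k + 1) * (2 * k choose k)"
proof -
  have a: "Suc k * (Suc (2 * k + 1) choose Suc k) = Suc (2*k+1) * (2 * k + 1 choose k)"
    by (rule Suc_times_binomial)
  have b: "(2 * k + 1 - k) * (2 * k + 1 choose k) = (2*k+1) * (2 * k choose k)"
    using binomial_absorb_comp[of "2*k+1" k] by simp
  have c: "2 * Suc k = Suc (2 * k + 1)" by simp
  have d: "2 * k + 1 - k = Suc k" by simp
  have "Suc k * (2 * Suc k choose Suc k) = Suc (2*k+1) * (2 * k + 1 choose k)"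
    unfolding c by (rule a)
  also have "\<dots> = 2 * ((2 * k + 1 - k) * (2 * k + 1 choose k))" unfolding d by simp
  also have "\<dots> = 2 * ((2*k+1) * (2 * k choose k))" by (simp only: b)
  finally show ?thesis by simp
qed

context
  fixes p m :: nat
  assumes pr: "prime p" and p2: "p > 2" and mdef: "m = (p - 1) div 2"
begin

lemma p_eq: "p = 2 * m + 1"
  using prime_odd_nat[OF pr p2] mdef by (auto elim!: oddE)

lemma lemA:
  assumes ch: "CHAR('a::field) = p" and "k \<le> m"
  shows "(of_nat (m choose k) :: 'a) * 4 ^ k = (-1) ^ k * of_nat (2 * k choose k)"
  using assms(2)
proof (induction k)
  case 0
  then show ?case by simp
next
  case (Suc k)
  have nz: "(of_nat (Suc k) :: 'a) \<noteq> 0"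
    using of_nat_nz_char[OF ch, of "Suc k"] Suc.prems p_eq by simp
  have m4: "(of_nat (m - k) :: 'a) * 4 = - (2 * (2 * of_nat k + 1))"
  proof -
    have "(of_nat p :: 'a) = 0" using ch of_nat_CHAR[where 'a='a] by simp
    moreover have "(of_nat m :: 'a) * 2 + 1 = of_nat p" using p_eq by simp
    ultimately have h: "of_nat m * 2 = (-1::'a)" by (simp add: eq_neg_iff_add_eq_0)
    have "(of_nat (m - k) :: 'a) = of_nat m - of_nat k" using Suc.prems by (simp add: of_nat_diff)
    then have "(of_nat (m - k) :: 'a) * 4 = (of_nat m - of_nat k) * 4" by simp
    also have "\<dots> = 2 * (of_nat m * 2) - 4 * of_nat k"
      by (simp add: algebra_simps)
    also have "\<dots> = - (2 * (2 * of_nat k + 1))" unfolding h by (simp add: algebra_simps)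
    finally show ?thesis .
  qed
  have "of_nat (Suc k) * ((of_nat (m choose Suc k) :: 'a) * 4 ^ Suc k)
      = of_nat (Suc k * (m choose Suc k)) * 4 ^ Suc k" by (simp only: of_nat_mult mult.assoc)
  also have "\<dots> = of_nat (m - k) * 4 * (of_nat (m choose k) * 4 ^ k)"
    by (simp only: binom_rec1 of_nat_mult power_Suc mult_ac)
  also have "\<dots> = - (2 * (2 * of_nat k + 1)) * ((-1) ^ k * of_nat (2 * k choose k))"
    using Suc by (simp only: m4)
  also have "\<dots> = (-1) ^ Suc k * of_nat (2 * (2 * k + 1) * (2 * k choose k))"
    by (simp add: algebra_simps)
  also have "\<dots> = of_nat (Suc k) * ((-1) ^ Suc k * of_nat (2 * Suc k choose Suc k))"
    by (simp only: central_rec[symmetric]) (simp add: algebra_simps)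
  finally show ?case using nz by (metis mult_left_cancel)
qed

lemma lemB:
  assumes ch: "CHAR('a::field) = p" and "j + r \<le> 2 * m"
  shows "(of_nat (2 * m - j choose r) :: 'a) = (-1) ^ r * of_nat (j + r choose r)"
  using assms(2)
proof (induction r)
  case 0
  then show ?case by simp
next
  case (Suc r)
  have nz: "(of_nat (Suc r) :: 'a) \<noteq> 0"
    using of_nat_nz_char[OF ch, of "Suc r"] Suc.prems p_eq by simp
  have e: "(of_nat (2 * m - j - r) :: 'a) = - of_nat (j + r + 1)"
  proof -
    have "(of_nat p :: 'a) = 0" using ch of_nat_CHAR[where 'a='a] by simp
    moreover have "p = (2 * m - j - r) + (j + r + 1)" using Suc.prems p_eq by simp
    then have "(of_nat (2 * m - j - r) :: 'a) + of_nat (j + r + 1) = of_nat p"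
      by (simp only: of_nat_add[symmetric])
    ultimately show ?thesis by (metis eq_neg_iff_add_eq_0)
  qed
  have "of_nat (Suc r) * (of_nat (2 * m - j choose Suc r) :: 'a)
      = of_nat (Suc r * (2 * m - j choose Suc r))" by (simp only: of_nat_mult)
  also have "\<dots> = of_nat (2 * m - j - r) * of_nat (2 * m - j choose r)"
    by (simp only: binom_rec1) simp
  also have "\<dots> = - of_nat (j + r + 1) * ((-1) ^ r * of_nat (j + r choose r))"
    using Suc by (simp only: e)
  also have "\<dots> = (-1) ^ Suc r * of_nat (Suc (j + r) * (j + r choose r))"
    by (simp add: algebra_simps)
  also have "\<dots> = (-1) ^ Suc r * of_nat (Suc r * (j + Suc r choose Suc r))"
    by (simp only: Suc_times_binomial[symmetric]) simp
  also have "\<dots> = of_nat (Suc r) * ((-1) ^ Suc r * of_nat (j + Suc r choose Suc r))"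
    by (simp add: algebra_simps)
  finally show ?case using nz by (metis mult_left_cancel)
qed

lemma dvd_binom_big:
  assumes "a < p" "b < p" "p \<le> a + b"
  shows "p dvd (a + b choose a)"
proof -
  have "fact a * fact (a + b - a) * (a + b choose a) = fact (a + b)"
    by (rule binomial_fact_lemma) simp
  moreover have "p dvd fact (a + b)" using prime_dvd_fact_iff[OF pr] assms by simp
  moreover have "\<not> p dvd fact a" "\<not> p dvd fact b" using prime_dvd_fact_iff[OF pr] assms by auto
  ultimately have "p dvd fact a * fact b * (a + b choose a)" by simp
  then show ?thesis using pr \<open>\<not> p dvd fact a\<close> \<open>\<not> p dvd fact b\<close> by (simp add: prime_dvd_mult_iff)
qed

end



lemma nat_binom_ident:
  assumes "k \<le> t"
  shows "(2 * k choose k) * (t + k choose (t - k)) = (t choose k) * (t + k choose k)"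
proof -
  have "t + k choose (t - k) = t + k choose (2 * k)"
    using binomial_symmetric[of "2*k" "t+k"] assms by (simp add: add.commute)
  moreover have "(t + k choose (2 * k)) * (2 * k choose k) = (t + k choose k) * ((t + k - k) choose (2 * k - k))"
    by (rule choose_mult) (use assms in auto)
  ultimately show ?thesis by (simp add: mult.commute)
qed

context
  fixes p m :: nat
  assumes pr: "prime p" and p2: "p > 2" and mdef: "m = (p - 1) div 2"
begin

lemma term_main:
  fixes w :: "'a::field"
  assumes ch: "CHAR('a) = p" and "k \<le> t" "k \<le> m" "t + k \<le> 2 * m"
  shows "of_nat (m choose k) * ((-4 * w) ^ k * (of_nat (2 * (m - k) choose (t - k)) * (-1) ^ (2 * (m - k) - (t - k))))
       = of_nat ((t choose k) * ((t + k) choose k)) * w ^ k"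
proof -
  have A: "(of_nat (m choose k) :: 'a) * 4 ^ k = (-1) ^ k * of_nat (2 * k choose k)"
    by (rule lemA[OF pr p2 mdef ch]) (use assms in auto)
  have B0: "(of_nat (2 * m - 2 * k choose (t - k)) :: 'a) = (-1) ^ (t - k) * of_nat (2 * k + (t - k) choose (t - k))"
    by (rule lemB[OF pr p2 mdef ch]) (use assms in auto)
  have e1: "2 * m - 2 * k = 2 * (m - k)" by simp
  have e2: "2 * k + (t - k) = t + k" using assms by simp
  have B: "(of_nat (2 * (m - k) choose (t - k)) :: 'a) = (-1) ^ (t - k) * of_nat (t + k choose (t - k))"
    using B0 unfolding e1 e2 .
  have s1: "((-1)::'a) ^ k * (-1) ^ k = 1"
    by (simp flip: power_add)
  have s2: "((-1)::'a) ^ (t - k) * (-1) ^ (2 * (m - k) - (t - k)) = 1"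
  proof -
    have "(t - k) + (2 * (m - k) - (t - k)) = 2 * (m - k)" using assms by simp
    then have "((-1)::'a) ^ (t - k) * (-1) ^ (2 * (m - k) - (t - k)) = (-1) ^ (2 * (m - k))"
      by (metis power_add)
    then show ?thesis by simp
  qed
  have "of_nat (m choose k) * ((-4 * w) ^ k * (of_nat (2 * (m - k) choose (t - k)) * (-1) ^ (2 * (m - k) - (t - k))))
      = (of_nat (m choose k) * 4 ^ k) * (-1) ^ k * w ^ k * (of_nat (2 * (m - k) choose (t - k)) * (-1) ^ (2 * (m - k) - (t - k)))"
  proof -
    have "(-4 * w) = ((-1) * 4) * w" by simp
    then have c: "(-4 * w) ^ k = (-1) ^ k * 4 ^ k * w ^ k" by (simp only: power_mult_distrib)
    show ?thesis unfolding c by (simp only: mult_ac)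
  qed
  also have "\<dots> = ((-1) ^ k * (-1) ^ k) * ((-1) ^ (t - k) * (-1) ^ (2 * (m - k) - (t - k)))
       * (of_nat (2 * k choose k) * of_nat (t + k choose (t - k))) * w ^ k"
    unfolding A B by (simp only: mult_ac)
  also have "\<dots> = of_nat ((2 * k choose k) * (t + k choose (t - k))) * w ^ k"
    unfolding s1 s2 by simp
  also have "\<dots> = of_nat ((t choose k) * ((t + k) choose k)) * w ^ k"
    using nat_binom_ident[OF assms(2)] by simp
  finally show ?thesis .
qed

lemma cm_legendre:
  fixes a' :: "'a::field"
  assumes ch: "CHAR('a) = p" and tle: "t \<le> 2 * m"
  shows "coeff ([:1, a', 1:] ^ m) t = poly (legendre_poly t) (- a' / 2)"
proof -
  have pe: "p = 2 * m + 1" by (rule p_eq[OF pr p2 mdef])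
  have two: "(2::'a) \<noteq> 0"
    using of_nat_nz_char[OF ch, of 2] p2 by simp
  define w where "w = (- a' / 2 - 1) / 2"
  define c where "c = -4 * w"
  define L :: "'a poly" where "L = [:-1, 1:]"
  have four: "(4::'a) \<noteq> 0"
  proof -
    have "(4::'a) = 2 * 2" by simp
    then show ?thesis using two by (metis mult_eq_0_iff)
  qed
  have cw: "c = a' + 2" using two four unfolding c_def w_def by (simp add: field_simps)
  have peq: "[:1, a', 1:] = monom c 1 + L ^ 2"
  proof -
    have "L ^ 2 = [:1, -2, 1:]" unfolding L_def by (simp add: power2_eq_square)
    moreover have "monom c 1 = [:0, c:]" by (simp add: monom_Suc monom_0)
    ultimately show ?thesis by (simp add: cw)
  qed
  have cL: "coeff (L ^ n) r = of_nat (n choose r) * (-1) ^ (n - r)" for n r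
    unfolding L_def using coeff_lin_pow[of "-1" 1 n r] by simp
  have "[:1, a', 1:] ^ m = (\<Sum>k\<le>m. of_nat (m choose k) * monom c 1 ^ k * (L ^ 2) ^ (m - k))"
    unfolding peq by (rule binomial_ring)
  also have "\<dots> = (\<Sum>k\<le>m. smult (of_nat (m choose k)) (monom (c ^ k) k * L ^ (2 * (m - k))))"
    by (intro sum.cong refl) (simp add: monom_power of_nat_mult_conv_smult power_mult mult.assoc)
  finally have "coeff ([:1, a', 1:] ^ m) t
     = (\<Sum>k\<le>m. of_nat (m choose k) * coeff (monom (c ^ k) k * L ^ (2 * (m - k))) t)"
    by (simp add: coeff_sum)
  also have "\<dots> = (\<Sum>k\<le>m. of_nat (m choose k) * (if t < k then 0 else
        c ^ k * (of_nat (2 * (m - k) choose (t - k)) * (-1) ^ (2 * (m - k) - (t - k)))))"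
    by (intro sum.cong refl) (simp add: coeff_monom_mult cL)
  also have "\<dots> = (\<Sum>k\<le>2 * m. if k \<le> m then of_nat (m choose k) * (if t < k then 0 else
        c ^ k * (of_nat (2 * (m - k) choose (t - k)) * (-1) ^ (2 * (m - k) - (t - k)))) else 0)"
    by (rule sum.mono_neutral_cong_left) auto
  also have "\<dots> = (\<Sum>k\<le>2 * m. if k \<le> t then of_nat ((t choose k) * ((t + k) choose k)) * w ^ k else 0)"
  proof (intro sum.cong refl)
    fix k assume k2: "k \<in> {..2 * m}"
    show "(if k \<le> m then of_nat (m choose k) * (if t < k then 0 else
        c ^ k * (of_nat (2 * (m - k) choose (t - k)) * (-1) ^ (2 * (m - k) - (t - k)))) else 0)
        = (if k \<le> t then of_nat ((t choose k) * ((t + k) choose k)) * w ^ k else 0)"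
    proof (cases "k \<le> t")
      case False
      then show ?thesis by simp
    next
      case kt: True
      have big: "(of_nat ((t choose k) * ((t + k) choose k)) :: 'a) = 0" if "p \<le> k + t"
      proof -
        have "p dvd (k + t choose k)"
          by (rule dvd_binom_big[OF pr p2 mdef]) (use that kt tle pe in auto)
        then show ?thesis using ch by (simp add: of_nat_eq_0_iff_char_dvd add.commute)
      qed
      show ?thesis
      proof (cases "k \<le> m")
        case False
        then show ?thesis using kt big pe by simp
      next
        case km: True
        show ?thesis
        proof (cases "t + k \<le> 2 * m")
          case True
          then show ?thesis using km kt term_main[OF ch kt km True, of w] by (simp add: c_def)
        next
          case False
          then have "2 * (m - k) choose (t - k) = 0" using km kt by (simp add: binomial_eq_0)
          then have z1: "(of_nat (2 * (m - k) choose (t - k)) :: 'a) = 0" by (simp only: of_nat_0)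
          have z2: "(of_nat ((t choose k) * ((t + k) choose k)) :: 'a) = 0"
            by (rule big) (use False pe in simp)
          show ?thesis unfolding z1 z2 using km kt by simp
        qed
      qed
    qed
  qed
  also have "\<dots> = (\<Sum>k\<le>t. of_nat ((t choose k) * ((t + k) choose k)) * w ^ k)"
    by (rule sum.mono_neutral_cong_right) (use tle in auto)
  also have "\<dots> = poly (legendre_poly t) (- a' / 2)"
    using legendre_eval[OF two, of t "- a' / 2"] by (simp add: w_def)
  finally show ?thesis .
qed

end



lemma hyp_struct:
  fixes a b :: "'a::comm_ring_1"
  shows "hyp_poly g a b = monom 1 1 * pcompose [:b, a, 1:] (monom 1 g)"
proof -
  have "pcompose [:b, a, 1:] (monom 1 g) = monom b 0 + monom a g + monom 1 (2 * g)"
    by (simp add: pcompose_pCons monom_0 mult_monom smult_monom algebra_simps mult_2 mult_2_right)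
  then show ?thesis
    by (simp add: hyp_poly_def mult_monom algebra_simps)
qed

lemma coeff_hp:
  fixes a b :: "'a::comm_ring_1"
  assumes "g \<ge> 1"
  shows "coeff ((hyp_poly g a b) ^ m) r =
    (if r < m then 0 else if g dvd (r - m) then coeff ([:b, a, 1:] ^ m) ((r - m) div g) else 0)"
proof -
  have "(hyp_poly g a b) ^ m = monom 1 m * pcompose ([:b, a, 1:] ^ m) (monom 1 g)"
    by (simp add: hyp_struct power_mult_distrib monom_power pcompose_power_left')
  then show ?thesis
    by (simp add: coeff_monom_mult coeff_pcompose_xpow[OF assms])
qed

lemma scale_coeff:
  fixes a s :: "'a::field"
  assumes "s \<noteq> 0"
  shows "coeff ([:s ^ 2, a, 1:] ^ m) t = s ^ (2 * m) * inverse s ^ t * coeff ([:1, a / s, 1:] ^ m) t"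
proof -
  have e: "[:s ^ 2, a, 1:] = smult (s ^ 2) (pcompose [:1, a / s, 1:] [:0, inverse s:])"
    using assms by (simp add: pcompose_pCons power2_eq_square field_simps)
  show ?thesis
    unfolding e smult_power pcompose_power_left'[symmetric]
    by (simp add: coeff_pcompose_linear mult_ac flip: power_mult)
qed

lemma Fq_closed:
  fixes q :: nat
  assumes hq: "\<And>x y :: 'a::comm_ring_1. (x + y) ^ q = x ^ q + y ^ q" and q0: "q > 0"
  defines "S \<equiv> {x :: 'a. x ^ q = x}"
  shows "0 \<in> S" "1 \<in> S" "x \<in> S \<Longrightarrow> y \<in> S \<Longrightarrow> x + y \<in> S" "x \<in> S \<Longrightarrow> y \<in> S \<Longrightarrow> x * y \<in> S"
    "(\<And>i. i \<in> A \<Longrightarrow> f i \<in> S) \<Longrightarrow> sum f A \<in> S"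
proof -
  show "0 \<in> S" using q0 by (simp add: S_def zero_power)
  show "1 \<in> S" by (simp add: S_def)
  show add: "x + y \<in> S" if "x \<in> S" "y \<in> S" for x y using that hq by (simp add: S_def)
  show "x * y \<in> S" if "x \<in> S" "y \<in> S" using that by (simp add: S_def power_mult_distrib)
  show "(\<And>i. i \<in> A \<Longrightarrow> f i \<in> S) \<Longrightarrow> sum f A \<in> S"
  proof (induction A rule: infinite_finite_induct)
    case (infinite A)
    then show ?case using q0 by (simp add: S_def zero_power)
  next
    case empty
    then show ?case using q0 by (simp add: S_def zero_power)
  next
    case (insert x F)
    then show ?case using add by simp
  qed
qed

lemma poly_pow_in:
  fixes q :: nat
  assumes hq: "\<And>x y :: 'a::comm_ring_1. (x + y) ^ q = x ^ q + y ^ q" and q0: "q > 0"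
    and P: "\<And>i. coeff P i \<in> {x :: 'a. x ^ q = x}"
  shows "coeff (P ^ n) i \<in> {x :: 'a. x ^ q = x}"
proof (induction n arbitrary: i)
  case 0
  then show ?case using Fq_closed[OF hq q0] by (simp add: coeff_1)
next
  case (Suc n)
  show ?case
    unfolding power_Suc coeff_mult
    by (intro Fq_closed(5)[OF hq q0] Fq_closed(4)[OF hq q0] P Suc)
qed




theorem theorem4:
  fixes p n g :: nat and a b s :: "'a::{field,finite}"
    and i j :: nat
  defines "q \<equiv> p ^ n"
  defines "m \<equiv> (p - 1) div 2"
  defines "Fq \<equiv> {x :: 'a. x ^ q = x}"
  assumes "prime p" and "p > 2" and "n \<ge> 1"
    and "CARD('a) = q ^ 2" and "CHAR('a) = p"
    and "g \<ge> 1" and "coprime p g"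
    and "a \<in> Fq" and "b \<in> Fq" and "b \<noteq> 0"
    and "coprime (hyp_poly g a b) (pderiv (hyp_poly g a b))"
    and "s ^ 2 = b"
    and "1 \<le> i" and "i \<le> g" and "1 \<le> j" and "j \<le> g"
  shows
    "([int i * int p - int j = int m] (mod int g) \<longrightarrow>
        cartier_manin_entry p (hyp_poly g a b) i j =
          s powi (2 * int m + (int m - (int i * int p - int j)) div int g) *
          cartier_manin_entry p (hyp_poly g (a / s) 1) i j
      \<and> cartier_manin_entry p (hyp_poly g (a / s) 1) i j =
          poly (legendre_poly (nat ((int i * int p - int j - int m) div int g))) (- a / (2 * s))
      \<and> cartier_manin_entry p (hyp_poly g a b) i j \<in> Fq)
     \<and> (\<not> [int i * int p - int j = int m] (mod int g) \<longrightarrow>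
        cartier_manin_entry p (hyp_poly g a b) i j = 0)"
proof -
  have pr: "prime p" and p2: "p > 2" and ch: "CHAR('a) = p" and g1: "g \<ge> 1"
    using assms by auto
  have mdef: "m = (p - 1) div 2" by (simp add: m_def)
  have pe: "p = 2 * m + 1" by (rule p_eq[OF pr p2 mdef])
  have q0: "q > 0" using p2 by (simp add: q_def)
  have hq: "(x + y) ^ q = x ^ q + y ^ q" for x y :: 'a
    using freshmans_dream'[of q n x y] ch pr by (simp add: q_def)
  have s0: "s \<noteq> 0" using assms by auto
  define K where "K = int i * int p - int j"
  have cme: "cartier_manin_entry p P i j = (if K < 0 then 0 else coeff (P ^ m) (nat K))" for P :: "'a poly"
    by (simp add: cartier_manin_entry_def cm_coeff_def K_def m_def)
  have Klo: "K \<ge> int p - int g"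
  proof -
    have h1: "int 1 * int p \<le> int i * int p" using assms by (intro mult_right_mono) auto
    have h2: "int j \<le> int g" using assms by simp
    show ?thesis using h1 h2 unfolding K_def by linarith
  qed
  have Khi: "K \<le> int g * int p - 1"
  proof -
    have h1: "int i * int p \<le> int g * int p" using assms by (intro mult_right_mono) auto
    have h2: "int j \<ge> 1" using assms by simp
    show ?thesis using h1 h2 unfolding K_def by linarith
  qed
  have hpFq: "coeff (hyp_poly g a b) k \<in> Fq" for k
  proof -
    have "coeff (hyp_poly g a b) k = (if 2 * g + 1 = k then 1 else 0) + (if g + 1 = k then a else 0) + (if 1 = k then b else 0)"
      by (simp add: hyp_poly_def coeff_monom)
    then show ?thesis
      using Fq_closed[OF hq q0] assms(11,12) unfolding Fq_def by simp
  qed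
  show ?thesis
  proof (intro conjI impI)
    assume nc: "\<not> [int i * int p - int j = int m] (mod int g)"
    show "cartier_manin_entry p (hyp_poly g a b) i j = 0"
    proof (cases "K < 0")
      case True
      then show ?thesis by (simp add: cme)
    next
      case False
      have "\<not> g dvd (nat K - m)" if "\<not> nat K < m"
      proof
        assume "g dvd (nat K - m)"
        then have "int g dvd int (nat K - m)" by simp
        moreover have "int (nat K - m) = K - int m" using that False by simp
        ultimately have "[K = int m] (mod int g)" by (simp add: cong_iff_dvd_diff)
        then show False using nc by (simp add: K_def)
      qed
      then show ?thesis using False by (simp add: cme coeff_hp[OF g1])
    qed
  next
    assume c: "[int i * int p - int j = int m] (mod int g)"
    then have "int g dvd (K - int m)" by (simp add: cong_iff_dvd_diff K_def)
    then obtain T where KT: "K - int m = int g * T" by (elim dvdE)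
    have T0: "T \<ge> 0"
    proof (rule ccontr)
      assume "\<not> T \<ge> 0"
      then have "T \<le> -1" by simp
      then have "int g * T \<le> int g * (-1)" by (intro mult_left_mono) auto
      then show False using KT Klo pe by simp
    qed
    have T2: "T \<le> 2 * int m"
    proof (rule ccontr)
      assume "\<not> T \<le> 2 * int m"
      then have "T \<ge> int p" using pe by simp
      then have "int g * T \<ge> int g * int p" by (intro mult_left_mono) auto
      then show False using KT Khi by simp
    qed
    define t where "t = nat T"
    have tT: "int t = T" using T0 by (simp add: t_def)
    have tle: "t \<le> 2 * m" using T2 tT by simp
    have "int g * T \<ge> 0" using T0 by simp
    then have K0: "\<not> K < 0" using KT by linarith
    have nK: "nat K = m + g * t"
    proof -
      have "K = int m + int g * int t" using KT tT by simp
      then show ?thesis by (simp add: nat_add_distrib nat_mult_distrib)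
    qed
    have cf: "coeff ((hyp_poly g A B) ^ m) (nat K) = coeff ([:B, A, 1:] ^ m) t" for A B :: 'a
      using g1 by (simp add: coeff_hp nK)
    have E1: "cartier_manin_entry p (hyp_poly g a b) i j = s ^ (2 * m) * inverse s ^ t * coeff ([:1, a / s, 1:] ^ m) t"
      using K0 cf[of a b] scale_coeff[OF s0, of a m t] assms(15) by (simp add: cme)
    have E2: "cartier_manin_entry p (hyp_poly g (a / s) 1) i j = coeff ([:1, a / s, 1:] ^ m) t"
      using K0 cf[of "a / s" 1] by (simp add: cme)
    have ex: "2 * int m + (int m - (int i * int p - int j)) div int g = int (2 * m - t)"
    proof -
      have e: "int m - (int i * int p - int j) = int g * (- T)" using KT unfolding K_def by simp
      have d: "int g * (- T) div int g = - T" by (rule nonzero_mult_div_cancel_left) (use g1 in simp)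
      have "(int m - (int i * int p - int j)) div int g = - T" by (simp only: e d)
      then show ?thesis using tle tT by simp
    qed
    have pw: "s ^ (2 * m - t) = s ^ (2 * m) * inverse s ^ t"
      using power_diff[OF s0 tle] by (simp add: divide_inverse power_inverse)
    have li: "nat ((int i * int p - int j - int m) div int g) = t"
    proof -
      have "(int i * int p - int j - int m) = int g * T" using KT unfolding K_def by simp
      then show ?thesis using g1 by (simp add: t_def)
    qed
    have aa: "- (a / s) / 2 = - a / (2 * s)" by (simp add: divide_divide_eq_left mult.commute)
    show "cartier_manin_entry p (hyp_poly g a b) i j =
          s powi (2 * int m + (int m - (int i * int p - int j)) div int g) *
          cartier_manin_entry p (hyp_poly g (a / s) 1) i j"
      unfolding ex E1 E2 power_int_of_nat pw ..
    show "cartier_manin_entry p (hyp_poly g (a / s) 1) i j =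
          poly (legendre_poly (nat ((int i * int p - int j - int m) div int g))) (- a / (2 * s))"
      unfolding E2 li using cm_legendre[OF pr p2 mdef ch tle, of "a / s"] aa by (simp add: mult.commute)
    show "cartier_manin_entry p (hyp_poly g a b) i j \<in> Fq"
      using K0 poly_pow_in[OF hq q0, of "hyp_poly g a b" m "nat K"] hpFq
      unfolding Fq_def by (simp add: cme)
  qed
qed


end
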